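(* Let $\mathbb I$ be an index coding problem with message set ${\cal W}$ and let ${\cal W}'\subseteq{\cal W}$. If there is a ${\cal W}'$-restricted internal conflict, then the restricted problem ${\mathbb I}_{{\cal W}'}$ admits no valid scalar linear index code of length $2$ over any finite field. If there are no ${\cal W}'$-restricted internal conflicts, then ${\mathbb I}_{{\cal W}'}$ admits a valid scalar linear index code of length $2$ over every sufficiently large finite field.
   Context: Index coding setup: An index coding problem $\mathbb I$ over a finite field $\mathbb F$ consists of a set of messages ${\cal W}=\{W_1,\dots,W_n\}$ (each message is a symbol of $\mathbb F$ in the scalar setting), a set of receivers $[1:T]$, and for each receiver $j$ a demand set $D(j)\subseteq{\cal W}$ and a side-information set $S(j)\subseteq {\cal W}\setminus D(j)$. Every message is demanded by at least one receiver. For a receiver $j$ and $W_k\in D(j)$, the interfering set is $Interf_k(j)={\cal W}\setminus(\{W_k\}\cup S(j))$; if $W_k\notin D(j)$ then $Interf_k(j)=\emptyset$. A scalar linear index code of length $L$ over $\mathbb F$ is an assignment of vectors $V_1,\dots,V_n\in\mathbb F^L$ to the messages; the source broadcasts $\sum_{i=1}^n V_iW_i\in\mathbb F^L$, and the code is valid if every receiver $j$ can recover every message of $D(j)$ from the broadcast codeword and the messages in $S(j)$. Two distinct messages $W_i,W_k$ are in conflict if there is a receiver $j$ with $W_k\in D(j)$ and $W_i\in Interf_k(j)$, or a receiver $j$ with $W_i\in D(j)$ and $W_k\in Interf_i(j)$. Alignment graph: the graph with vertex set ${\cal W}$ in which distinct $W_a,W_b$ are adjacent if there exist a receiver $j$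 and a message $W_k\in D(j)$ with $W_k\notin\{W_a,W_b\}$ and $W_a,W_b\notin S(j)$. An alignment set is the vertex set of a connected component of the alignment graph. An internal conflict is a conflict between two messages lying in the same alignment set. Restricted problem: for ${\cal W}'\subseteq{\cal W}$, the ${\cal W}'$-restricted index coding problem ${\mathbb I}_{{\cal W}'}$ has message set ${\cal W}'$, receivers the receivers $j$ of $\mathbb I$ with $D(j)\cap{\cal W}'\neq\emptyset$, and for each such $j$ demand set $D(j)\cap{\cal W}'$ and side-information set $S(j)\cap{\cal W}'$. The ${\cal W}'$-restricted alignment graph, alignment sets and internal conflicts are the alignment graph, alignment sets and internal conflicts of ${\mathbb I}_{{\cal W}'}$ (conflicts being computed in ${\mathbb I}_{{\cal W}'}$). *)

theory Defs
  imports "HOL-Algebra.Ring" "HOL-Algebra.Ring_Divisibility"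
begin

definition index_coding_problem ::
  "'m set \<Rightarrow> nat set \<Rightarrow> (nat \<Rightarrow> 'm set) \<Rightarrow> (nat \<Rightarrow> 'm set) \<Rightarrow> bool" where
  "index_coding_problem W R D S \<longleftrightarrow>
     finite W \<and> finite R \<and>
     (\<forall>j\<in>R. D j \<subseteq> W \<and> S j \<subseteq> W - D j) \<and>
     (\<forall>w\<in>W. \<exists>j\<in>R. w \<in> D j)"

definition Interf :: "'m set \<Rightarrow> (nat \<Rightarrow> 'm set) \<Rightarrow> (nat \<Rightarrow> 'm set) \<Rightarrow> nat \<Rightarrow> 'm \<Rightarrow> 'm set" where
  "Interf W D S j k = (if k \<in> D j then W - ({k} \<union> S j) else {})"

definition in_conflict ::
  "'m set \<Rightarrow> nat set \<Rightarrow> (nat \<Rightarrow> 'm set) \<Rightarrow> (nat \<Rightarrow> 'm set) \<Rightarrow> 'm \<Rightarrow> 'm \<Rightarrow> bool" where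
  "in_conflict W R D S a b \<longleftrightarrow>
     a \<in> W \<and> b \<in> W \<and> a \<noteq> b \<and>
     ((\<exists>j\<in>R. b \<in> D j \<and> a \<in> Interf W D S j b) \<or>
      (\<exists>j\<in>R. a \<in> D j \<and> b \<in> Interf W D S j a))"

definition align_edge ::
  "'m set \<Rightarrow> nat set \<Rightarrow> (nat \<Rightarrow> 'm set) \<Rightarrow> (nat \<Rightarrow> 'm set) \<Rightarrow> 'm \<Rightarrow> 'm \<Rightarrow> bool" where
  "align_edge W R D S a b \<longleftrightarrow>
     a \<in> W \<and> b \<in> W \<and> a \<noteq> b \<and>
     (\<exists>j\<in>R. \<exists>k\<in>D j. k \<noteq> a \<and> k \<noteq> b \<and> a \<notin> S j \<and> b \<notin> S j)"

definition same_alignment_set ::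
  "'m set \<Rightarrow> nat set \<Rightarrow> (nat \<Rightarrow> 'm set) \<Rightarrow> (nat \<Rightarrow> 'm set) \<Rightarrow> 'm \<Rightarrow> 'm \<Rightarrow> bool" where
  "same_alignment_set W R D S a b \<longleftrightarrow>
     a \<in> W \<and> b \<in> W \<and> (align_edge W R D S)\<^sup>*\<^sup>* a b"

definition has_internal_conflict ::
  "'m set \<Rightarrow> nat set \<Rightarrow> (nat \<Rightarrow> 'm set) \<Rightarrow> (nat \<Rightarrow> 'm set) \<Rightarrow> bool" where
  "has_internal_conflict W R D S \<longleftrightarrow>
     (\<exists>a b. in_conflict W R D S a b \<and> same_alignment_set W R D S a b)"

definition restr_receivers :: "'m set \<Rightarrow> nat set \<Rightarrow> (nat \<Rightarrow> 'm set) \<Rightarrow> nat set" where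
  "restr_receivers W' R D = {j \<in> R. D j \<inter> W' \<noteq> {}}"

definition restr_sets :: "'m set \<Rightarrow> (nat \<Rightarrow> 'm set) \<Rightarrow> nat \<Rightarrow> 'm set" where
  "restr_sets W' X = (\<lambda>j. X j \<inter> W')"

definition codeword :: "('e, 'x) ring_scheme \<Rightarrow> 'm set \<Rightarrow> ('m \<Rightarrow> nat \<Rightarrow> 'e) \<Rightarrow> ('m \<Rightarrow> 'e) \<Rightarrow> nat \<Rightarrow> 'e" where
  "codeword Fld W V w l = finsum Fld (\<lambda>i. V i l \<otimes>\<^bsub>Fld\<^esub> w i) W"

definition valid_scalar_linear_code ::
  "('e, 'x) ring_scheme \<Rightarrow> 'm set \<Rightarrow> nat set \<Rightarrow> (nat \<Rightarrow> 'm set) \<Rightarrow> (nat \<Rightarrow> 'm set)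
     \<Rightarrow> nat \<Rightarrow> ('m \<Rightarrow> nat \<Rightarrow> 'e) \<Rightarrow> bool" where
  "valid_scalar_linear_code Fld W R D S L V \<longleftrightarrow>
     (\<forall>i\<in>W. \<forall>l<L. V i l \<in> carrier Fld) \<and>
     (\<forall>j\<in>R. \<forall>k\<in>D j. \<forall>w w'.
        w \<in> W \<rightarrow> carrier Fld \<and> w' \<in> W \<rightarrow> carrier Fld \<and>
        (\<forall>i\<in>S j. w i = w' i) \<and>
        (\<forall>l<L. codeword Fld W V w l = codeword Fld W V w' l)
        \<longrightarrow> w k = w' k)"

end

theory Submission imports Defs begin

definition dt :: "('e,'x) ring_scheme \<Rightarrow> ('m \<Rightarrow> nat \<Rightarrow> 'e) \<Rightarrow> 'm \<Rightarrow> 'm \<Rightarrow> 'e" where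
  "dt R V a b = V a 0 \<otimes>\<^bsub>R\<^esub> V b 1 \<ominus>\<^bsub>R\<^esub> V a 1 \<otimes>\<^bsub>R\<^esub> V b 0"

lemma (in field) fs1: "f b \<in> carrier R \<Longrightarrow> finsum R f {b} = f b"
  using finsum_insert[of "{}" b f] by simp

lemma (in field) cw1:
  assumes "finite W" "k \<in> W" "w \<in> W \<rightarrow> carrier R" "\<forall>i\<in>W. V i l \<in> carrier R"
    "\<forall>i\<in>W - {k}. w i = \<zero>"
  shows "codeword R W V w l = V k l \<otimes> w k"
proof -
  have "codeword R W V w l = finsum R (\<lambda>i. V i l \<otimes> w i) {k}"
    unfolding codeword_def
    by (rule add.finprod_mono_neutral_cong_right) (use assms in auto)
  then show ?thesis using assms by (auto intro!: fs1)
qed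

lemma (in field) cw2:
  assumes "finite W" "k \<in> W" "a \<in> W" "k \<noteq> a" "w \<in> W \<rightarrow> carrier R" "\<forall>i\<in>W. V i l \<in> carrier R"
    "\<forall>i\<in>W - {k,a}. w i = \<zero>"
  shows "codeword R W V w l = V k l \<otimes> w k \<oplus> V a l \<otimes> w a"
proof -
  have "codeword R W V w l = finsum R (\<lambda>i. V i l \<otimes> w i) {k,a}"
    unfolding codeword_def
    by (rule add.finprod_mono_neutral_cong_right) (use assms in auto)
  also have "\<dots> = V k l \<otimes> w k \<oplus> finsum R (\<lambda>i. V i l \<otimes> w i) {a}"
    by (rule finsum_insert) (use assms in auto)
  finally show ?thesis using assms by (auto simp: fs1 Pi_iff)
qed

lemma (in field) cw3:
  assumes "finite W" "k \<in> W" "a \<in> W" "b \<in> W" "k \<noteq> a" "k \<noteq> b" "a \<noteq> b"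
    "w \<in> W \<rightarrow> carrier R" "\<forall>i\<in>W. V i l \<in> carrier R"
    "\<forall>i\<in>W - {k,a,b}. w i = \<zero>"
  shows "codeword R W V w l = V k l \<otimes> w k \<oplus> (V a l \<otimes> w a \<oplus> V b l \<otimes> w b)"
proof -
  have "codeword R W V w l = finsum R (\<lambda>i. V i l \<otimes> w i) {k,a,b}"
    unfolding codeword_def
    by (rule add.finprod_mono_neutral_cong_right) (use assms in auto)
  also have "\<dots> = V k l \<otimes> w k \<oplus> finsum R (\<lambda>i. V i l \<otimes> w i) {a,b}"
    by (rule finsum_insert) (use assms in auto)
  also have "finsum R (\<lambda>i. V i l \<otimes> w i) {a,b} = V a l \<otimes> w a \<oplus> finsum R (\<lambda>i. V i l \<otimes> w i) {b}"
    by (rule finsum_insert) (use assms in auto)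
  finally show ?thesis using assms by (auto simp: fs1 Pi_iff)
qed

lemma (in field) valid_zero:
  assumes "valid_scalar_linear_code R W R' D S 2 V" "j \<in> R'" "k \<in> D j"
    "w \<in> W \<rightarrow> carrier R" "\<forall>i\<in>S j. w i = \<zero>"
    "codeword R W V w 0 = \<zero>" "codeword R W V w 1 = \<zero>"
  shows "w k = \<zero>"
proof -
  have z: "codeword R W V (\<lambda>_. \<zero>) l = \<zero>" if "l < 2" for l
  proof -
    have "codeword R W V (\<lambda>_. \<zero>) l = finsum R (\<lambda>i. \<zero>) W"
      unfolding codeword_def
      by (rule finsum_cong') (use assms that in \<open>auto simp: valid_scalar_linear_code_def\<close>)
    then show ?thesis by simp
  qed
  have "\<forall>l<2. codeword R W V w l = codeword R W V (\<lambda>_. \<zero>) l"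
    using z assms(6,7) less_2_cases by auto
  then show ?thesis using assms(1-5)
    unfolding valid_scalar_linear_code_def
    by (metis (no_types, lifting) Pi_I zero_closed)
qed

lemma (in field) nonzero_vec:
  assumes "valid_scalar_linear_code R W R' D S 2 V" "finite W" "j \<in> R'" "k \<in> D j" "k \<in> W" "k \<notin> S j"
  shows "V k 0 \<noteq> \<zero> \<or> V k 1 \<noteq> \<zero>"
proof (rule ccontr)
  assume c: "\<not> ?thesis"
  define w where "w = (\<lambda>i. if i = k then \<one> else \<zero>)"
  have Vc: "\<forall>i\<in>W. \<forall>l<2. V i l \<in> carrier R" using assms(1) unfolding valid_scalar_linear_code_def by auto
  have wc: "w \<in> W \<rightarrow> carrier R" unfolding w_def by auto
  have "codeword R W V w l = V k l \<otimes> w k" if "l < 2" for l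
    by (rule cw1) (use assms Vc that wc in \<open>auto simp: w_def\<close>)
  then have "codeword R W V w 0 = \<zero>" "codeword R W V w 1 = \<zero>" using c by (auto simp: w_def)
  moreover have "\<forall>i\<in>S j. w i = \<zero>" using assms(6) by (auto simp: w_def)
  ultimately have "w k = \<zero>" using valid_zero[OF assms(1,3,4) wc] by auto
  then show False by (simp add: w_def)
qed

lemma (in field) edge_dt:
  assumes "valid_scalar_linear_code R W R' D S 2 V" "finite W" "j \<in> R'" "k \<in> D j"
    "k \<in> W" "a \<in> W" "b \<in> W" "k \<noteq> a" "k \<noteq> b" "a \<noteq> b"
    "k \<notin> S j" "a \<notin> S j" "b \<notin> S j"
  shows "dt R V a b = \<zero>"
proof -
  have Vc: "\<forall>i\<in>W. \<forall>l<2. V i l \<in> carrier R" using assms(1) unfolding valid_scalar_linear_code_def by auto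
  have c: "V i l \<in> carrier R" if "i \<in> {k,a,b}" "l \<in> {0,1}" for i l using Vc that assms by auto
  define w where "w = (\<lambda>i. if i = k then dt R V a b else if i = a then \<ominus> dt R V k b
      else if i = b then \<ominus> dt R V a k else \<zero>)"
  have wc: "w \<in> W \<rightarrow> carrier R" unfolding w_def dt_def using c by auto
  have cw: "codeword R W V w l = V k l \<otimes> w k \<oplus> (V a l \<otimes> w a \<oplus> V b l \<otimes> w b)" if "l < 2" for l
    by (rule cw3) (use assms Vc that wc in \<open>auto simp: w_def\<close>)
  have wk: "w k = dt R V a b" "w a = \<ominus> dt R V k b" "w b = \<ominus> dt R V a k" using assms by (auto simp: w_def)
  have c0: "V k 0 \<in> carrier R" "V a 0 \<in> carrier R" "V b 0 \<in> carrier R"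
    "V k 1 \<in> carrier R" "V a 1 \<in> carrier R" "V b 1 \<in> carrier R" using c by auto
  have "V k 0 \<otimes> dt R V a b \<oplus> (V a 0 \<otimes> \<ominus> dt R V k b \<oplus> V b 0 \<otimes> \<ominus> dt R V a k) = \<zero>"
    using c0 unfolding dt_def by algebra
  moreover have "V k 1 \<otimes> dt R V a b \<oplus> (V a 1 \<otimes> \<ominus> dt R V k b \<oplus> V b 1 \<otimes> \<ominus> dt R V a k) = \<zero>"
    using c0 unfolding dt_def by algebra
  ultimately have "codeword R W V w 0 = \<zero>" "codeword R W V w 1 = \<zero>" using cw wk by auto
  moreover have "\<forall>i\<in>S j. w i = \<zero>" using assms by (auto simp: w_def)
  ultimately have "w k = \<zero>" using valid_zero[OF assms(1,3,4) wc] by auto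
  then show ?thesis using wk by simp
qed

lemma (in field) conflict_dt:
  assumes "valid_scalar_linear_code R W R' D S 2 V" "finite W" "j \<in> R'" "b \<in> D j"
    "a \<in> W" "b \<in> W" "a \<noteq> b" "a \<notin> S j" "b \<notin> S j" "V a 0 \<noteq> \<zero> \<or> V a 1 \<noteq> \<zero>"
  shows "dt R V a b \<noteq> \<zero>"
proof
  assume d0: "dt R V a b = \<zero>"
  have Vc: "\<forall>i\<in>W. \<forall>l<2. V i l \<in> carrier R" using assms(1) unfolding valid_scalar_linear_code_def by auto
  have c0: "V a 0 \<in> carrier R" "V b 0 \<in> carrier R"
    "V a 1 \<in> carrier R" "V b 1 \<in> carrier R" using Vc assms by auto
  obtain p q where pq: "p \<in> carrier R" "q \<in> carrier R" "p \<noteq> \<zero>"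
    "V b 0 \<otimes> p \<oplus> V a 0 \<otimes> q = \<zero>" "V b 1 \<otimes> p \<oplus> V a 1 \<otimes> q = \<zero>"
  proof (cases "V a 0 \<noteq> \<zero>")
    case True
    have "V b 0 \<otimes> V a 0 \<oplus> V a 0 \<otimes> \<ominus> V b 0 = \<zero>" using c0 by algebra
    moreover have "V b 1 \<otimes> V a 0 \<oplus> V a 1 \<otimes> \<ominus> V b 0 = dt R V a b" using c0 unfolding dt_def by algebra
    ultimately show ?thesis using that[of "V a 0" "\<ominus> V b 0"] True c0 d0 by auto
  next
    case False
    then have T: "V a 1 \<noteq> \<zero>" using assms by auto
    have "V b 1 \<otimes> V a 1 \<oplus> V a 1 \<otimes> \<ominus> V b 1 = \<zero>" using c0 by algebra
    moreover have "V b 0 \<otimes> V a 1 \<oplus> V a 0 \<otimes> \<ominus> V b 1 = \<ominus> dt R V a b" using c0 unfolding dt_def by algebra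
    ultimately show ?thesis using that[of "V a 1" "\<ominus> V b 1"] T c0 d0 by auto
  qed
  define w where "w = (\<lambda>i. if i = b then p else if i = a then q else \<zero>)"
  have wc: "w \<in> W \<rightarrow> carrier R" unfolding w_def using pq by auto
  have cw: "codeword R W V w l = V b l \<otimes> w b \<oplus> V a l \<otimes> w a" if "l < 2" for l
    by (rule cw2) (use assms Vc that wc in \<open>auto simp: w_def\<close>)
  have "codeword R W V w 0 = \<zero>" "codeword R W V w 1 = \<zero>" using cw pq assms by (auto simp: w_def)
  moreover have "\<forall>i\<in>S j. w i = \<zero>" using assms by (auto simp: w_def)
  ultimately have "w b = \<zero>" using valid_zero[OF assms(1,3,4) wc] by auto
  then show False using pq by (simp add: w_def)
qed

lemma (in field) dt_trans:
  assumes "V a 0 \<in> carrier R" "V a 1 \<in> carrier R" "V b 0 \<in> carrier R" "V b 1 \<in> carrier R"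
    "V c 0 \<in> carrier R" "V c 1 \<in> carrier R" "V b 0 \<noteq> \<zero> \<or> V b 1 \<noteq> \<zero>"
    "dt R V a b = \<zero>" "dt R V b c = \<zero>"
  shows "dt R V a c = \<zero>"
proof -
  have dc: "dt R V a c \<in> carrier R" using assms unfolding dt_def by auto
  have "V b 0 \<otimes> dt R V a c = V a 0 \<otimes> dt R V b c \<oplus> V c 0 \<otimes> dt R V a b"
    using assms(1-6) unfolding dt_def by algebra
  then have e0: "V b 0 \<otimes> dt R V a c = \<zero>" using assms by simp
  have "V b 1 \<otimes> dt R V a c = V a 1 \<otimes> dt R V b c \<oplus> V c 1 \<otimes> dt R V a b"
    using assms(1-6) unfolding dt_def by algebra
  then have e1: "V b 1 \<otimes> dt R V a c = \<zero>" using assms by simp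
  show ?thesis using e0 e1 assms(3,4,7) dc integral_iff by blast
qed

lemma (in field) dt_sym:
  assumes "V a 0 \<in> carrier R" "V a 1 \<in> carrier R" "V b 0 \<in> carrier R" "V b 1 \<in> carrier R"
  shows "dt R V b a = \<ominus> dt R V a b"
  using assms unfolding dt_def by algebra

lemma (in field) dt_refl:
  assumes "V a 0 \<in> carrier R" "V a 1 \<in> carrier R"
  shows "dt R V a a = \<zero>"
  using assms unfolding dt_def by algebra

lemma (in field) part1:
  assumes val: "valid_scalar_linear_code R W R' D S 2 V" and fin: "finite W"
    and P: "\<forall>j\<in>R'. D j \<subseteq> W \<and> S j \<subseteq> W - D j" "\<forall>a\<in>W. \<exists>j\<in>R'. a \<in> D j"
    and hc: "has_internal_conflict W R' D S"
  shows False
proof -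
  have Vc: "\<forall>i\<in>W. \<forall>l<2. V i l \<in> carrier R" using val unfolding valid_scalar_linear_code_def by auto
  have Vc2: "V i 0 \<in> carrier R" "V i 1 \<in> carrier R" if "i \<in> W" for i using Vc that by auto
  have nz: "V a 0 \<noteq> \<zero> \<or> V a 1 \<noteq> \<zero>" if aW: "a \<in> W" for a
  proof -
    obtain j where "j \<in> R'" "a \<in> D j" using P(2) aW by auto
    then show ?thesis using nonzero_vec[OF val fin] P(1) aW by blast
  qed
  have path: "dt R V a b = \<zero>" if "(align_edge W R' D S)\<^sup>*\<^sup>* a b" "a \<in> W" for a b
    using that(1)
  proof (induction rule: rtranclp_induct)
    case base
    then show ?case using dt_refl[of V a] Vc2[OF that(2)] by simp
  next
    case (step b c)
    from step.hyps(2) obtain j k where jk: "b \<in> W" "c \<in> W" "b \<noteq> c" "j \<in> R'" "k \<in> D j"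
      "k \<noteq> b" "k \<noteq> c" "b \<notin> S j" "c \<notin> S j" unfolding align_edge_def by blast
    have "k \<in> W" "k \<notin> S j" using P(1) jk by auto
    then have "dt R V b c = \<zero>" using edge_dt[OF val fin jk(4,5)] jk by auto
    then show ?case using dt_trans[of V a b c] step.IH Vc2 jk that(2) nz by blast
  qed
  from hc obtain a b where ab: "in_conflict W R' D S a b" "same_alignment_set W R' D S a b"
    unfolding has_internal_conflict_def by blast
  then have d: "dt R V a b = \<zero>" and abW: "a \<in> W" "b \<in> W" "a \<noteq> b"
    using path unfolding same_alignment_set_def in_conflict_def by auto
  have d': "dt R V b a = \<zero>" using dt_sym[of V a b] d Vc2 abW by simp
  from ab(1) consider (c1) j where "j \<in> R'" "b \<in> D j" "a \<in> Interf W D S j b"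
    | (c2) j where "j \<in> R'" "a \<in> D j" "b \<in> Interf W D S j a"
    unfolding in_conflict_def by blast
  then show False
  proof cases
    case c1
    then have "a \<notin> S j" "b \<notin> S j" using P(1) by (auto simp: Interf_def)
    then show False using conflict_dt[OF val fin c1(1,2)] abW nz d by auto
  next
    case c2
    then have "a \<notin> S j" "b \<notin> S j" using P(1) by (auto simp: Interf_def)
    then show False using conflict_dt[OF val fin c2(1,2)] abW nz d' by auto
  qed
qed

lemma (in field) lin_alg:
  assumes "xa \<in> carrier R" "wa \<in> carrier R" "wa' \<in> carrier R" "c \<in> carrier R"
    "A \<in> carrier R" "B \<in> carrier R" "C \<in> carrier R" "E \<in> carrier R"
  shows "(xa \<ominus> c) \<otimes> (wa \<ominus> wa') \<oplus> ((A \<ominus> B) \<ominus> c \<otimes> (C \<ominus> E)) =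
    ((xa \<otimes> wa \<oplus> A) \<ominus> (xa \<otimes> wa' \<oplus> B)) \<ominus> c \<otimes> ((wa \<oplus> C) \<ominus> (wa' \<oplus> E))"
  using assms by algebra

lemma (in field) lin_G:
  assumes "finite A" "x \<in> A \<rightarrow> carrier R" "w \<in> A \<rightarrow> carrier R" "w' \<in> A \<rightarrow> carrier R" "c \<in> carrier R"
  shows "(\<Oplus>i\<in>A. (x i \<ominus> c) \<otimes> (w i \<ominus> w' i)) =
    ((\<Oplus>i\<in>A. x i \<otimes> w i) \<ominus> (\<Oplus>i\<in>A. x i \<otimes> w' i)) \<ominus> c \<otimes> ((\<Oplus>i\<in>A. w i) \<ominus> (\<Oplus>i\<in>A. w' i))"
  using assms
proof (induction A rule: finite_induct)
  case empty
  then show ?case by (simp add: a_minus_def)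
next
  case (insert a F)
  have ca: "x a \<in> carrier R" "w a \<in> carrier R" "w' a \<in> carrier R" using insert.prems by auto
  have cF: "x \<in> F \<rightarrow> carrier R" "w \<in> F \<rightarrow> carrier R" "w' \<in> F \<rightarrow> carrier R" using insert.prems by auto
  have s1: "(\<Oplus>i\<in>insert a F. (x i \<ominus> c) \<otimes> (w i \<ominus> w' i)) = (x a \<ominus> c) \<otimes> (w a \<ominus> w' a) \<oplus> (\<Oplus>i\<in>F. (x i \<ominus> c) \<otimes> (w i \<ominus> w' i))"
    by (rule finsum_insert) (use insert ca cF in \<open>auto simp: Pi_iff\<close>)
  have s2: "(\<Oplus>i\<in>insert a F. x i \<otimes> w i) = x a \<otimes> w a \<oplus> (\<Oplus>i\<in>F. x i \<otimes> w i)"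
    by (rule finsum_insert) (use insert ca cF in \<open>auto simp: Pi_iff\<close>)
  have s3: "(\<Oplus>i\<in>insert a F. x i \<otimes> w' i) = x a \<otimes> w' a \<oplus> (\<Oplus>i\<in>F. x i \<otimes> w' i)"
    by (rule finsum_insert) (use insert ca cF in \<open>auto simp: Pi_iff\<close>)
  have s4: "(\<Oplus>i\<in>insert a F. w i) = w a \<oplus> (\<Oplus>i\<in>F. w i)"
    by (rule finsum_insert) (use insert ca cF in \<open>auto simp: Pi_iff\<close>)
  have s5: "(\<Oplus>i\<in>insert a F. w' i) = w' a \<oplus> (\<Oplus>i\<in>F. w' i)"
    by (rule finsum_insert) (use insert ca cF in \<open>auto simp: Pi_iff\<close>)
  have IH: "(\<Oplus>i\<in>F. (x i \<ominus> c) \<otimes> (w i \<ominus> w' i)) =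
    ((\<Oplus>i\<in>F. x i \<otimes> w i) \<ominus> (\<Oplus>i\<in>F. x i \<otimes> w' i)) \<ominus> c \<otimes> ((\<Oplus>i\<in>F. w i) \<ominus> (\<Oplus>i\<in>F. w' i))"
    using insert cF by auto
  have cs: "(\<Oplus>i\<in>F. x i \<otimes> w i) \<in> carrier R" "(\<Oplus>i\<in>F. x i \<otimes> w' i) \<in> carrier R"
    "(\<Oplus>i\<in>F. w i) \<in> carrier R" "(\<Oplus>i\<in>F. w' i) \<in> carrier R"
    using cF by (auto intro!: finsum_closed simp: Pi_iff)
  show ?case unfolding s1 s2 s3 s4 s5 IH using lin_alg[OF ca insert.prems(4) cs] by simp
qed

lemma (in field) decode:
  assumes fin: "finite W" and kW: "k \<in> W" and kS: "k \<notin> S" and xc: "x \<in> W \<rightarrow> carrier R"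
    and cc: "c \<in> carrier R" and xk: "x k \<noteq> c" and xI: "\<forall>i\<in>W - S - {k}. x i = c"
    and wc: "w \<in> W \<rightarrow> carrier R" "w' \<in> W \<rightarrow> carrier R" and wS: "\<forall>i\<in>S. w i = w' i"
    and e0: "codeword R W V w 0 = codeword R W V w' 0"
    and e1: "codeword R W V w 1 = codeword R W V w' 1"
    and V: "V = (\<lambda>i l. if l = 0 then \<one> else x i)"
  shows "w k = w' k"
proof -
  have cw0: "codeword R W V u 0 = (\<Oplus>i\<in>W. u i)" if "u \<in> W \<rightarrow> carrier R" for u
    unfolding codeword_def V by (rule finsum_cong') (use that in \<open>auto simp: Pi_iff\<close>)
  have cw1: "codeword R W V u 1 = (\<Oplus>i\<in>W. x i \<otimes> u i)" if "u \<in> W \<rightarrow> carrier R" for u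
    unfolding codeword_def V by simp
  have cs: "(\<Oplus>i\<in>W. x i \<otimes> w' i) \<in> carrier R" "(\<Oplus>i\<in>W. w' i) \<in> carrier R" "finsum R w' W \<in> carrier R"
    using xc wc by (auto intro!: finsum_closed simp: Pi_iff)
  have "(\<Oplus>i\<in>W. (x i \<ominus> c) \<otimes> (w i \<ominus> w' i)) = \<zero>"
    unfolding lin_G[OF fin xc wc cc]
    using e0 e1 cw0 cw1 wc cs cc by (simp add: a_minus_def r_neg)
  moreover have "(\<Oplus>i\<in>W. (x i \<ominus> c) \<otimes> (w i \<ominus> w' i)) =
      (\<Oplus>i\<in>W. if k = i then (x i \<ominus> c) \<otimes> (w i \<ominus> w' i) else \<zero>)"
  proof (rule finsum_cong')
    show "(\<lambda>i. if k = i then (x i \<ominus> c) \<otimes> (w i \<ominus> w' i) else \<zero>) \<in> W \<rightarrow> carrier R"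
      using xc wc cc by (auto simp: Pi_iff)
    fix i assume i: "i \<in> W"
    have ci: "x i \<in> carrier R" "w i \<in> carrier R" "w' i \<in> carrier R" using i xc wc by auto
    show "(x i \<ominus> c) \<otimes> (w i \<ominus> w' i) = (if k = i then (x i \<ominus> c) \<otimes> (w i \<ominus> w' i) else \<zero>)"
    proof (cases "k = i")
      case False
      show ?thesis
      proof (cases "i \<in> S")
        case True
        then show ?thesis using False wS ci cc by (simp add: a_minus_def r_neg)
      next
        case F2: False
        then show ?thesis using False xI i ci cc by (simp add: a_minus_def r_neg)
      qed
    qed simp
  qed simp
  moreover have "(\<Oplus>i\<in>W. if k = i then (x i \<ominus> c) \<otimes> (w i \<ominus> w' i) else \<zero>) = (x k \<ominus> c) \<otimes> (w k \<ominus> w' k)"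
    by (rule finsum_singleton) (use kW fin xc wc cc in \<open>auto simp: Pi_iff\<close>)
  ultimately have p: "(x k \<ominus> c) \<otimes> (w k \<ominus> w' k) = \<zero>" by simp
  have ck: "x k \<in> carrier R" "w k \<in> carrier R" "w' k \<in> carrier R" using kW xc wc by auto
  have "x k \<ominus> c \<noteq> \<zero>"
  proof
    assume h: "x k \<ominus> c = \<zero>"
    have "x k = (x k \<ominus> c) \<oplus> c" using ck cc by algebra
    then have "x k = \<zero> \<oplus> c" unfolding h .
    then show False using xk cc by simp
  qed
  then have z: "w k \<ominus> w' k = \<zero>" using p integral_iff ck cc by auto
  have "w k = (w k \<ominus> w' k) \<oplus> w' k" using ck by algebra
  then show ?thesis using z ck by simp
qed

lemma align_sym: "align_edge W R D S a b \<Longrightarrow> align_edge W R D S b a"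
  unfolding align_edge_def by blast

lemma align_rt_sym:
  assumes "(align_edge W R D S)\<^sup>*\<^sup>* a b" shows "(align_edge W R D S)\<^sup>*\<^sup>* b a"
  using assms
proof (induction rule: rtranclp_induct)
  case base then show ?case by simp
next
  case (step b c)
  then show ?case using align_sym converse_rtranclp_into_rtranclp by metis
qed

lemma sa_sym: "same_alignment_set W R D S a b \<Longrightarrow> same_alignment_set W R D S b a"
  unfolding same_alignment_set_def using align_rt_sym by metis

lemma sa_trans: "same_alignment_set W R D S a b \<Longrightarrow> same_alignment_set W R D S b c \<Longrightarrow> same_alignment_set W R D S a c"
  unfolding same_alignment_set_def by (meson rtranclp_trans)

lemma sa_refl: "a \<in> W \<Longrightarrow> same_alignment_set W R D S a a"
  unfolding same_alignment_set_def by simp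

lemma (in field) one_ne_add: "a \<in> carrier R \<Longrightarrow> a \<noteq> a \<oplus> \<one>"
proof
  assume a: "a \<in> carrier R" and h: "a = a \<oplus> \<one>"
  have "\<one> = (a \<oplus> \<one>) \<ominus> a" using a by algebra
  also have "\<dots> = a \<ominus> a" using h by simp
  also have "\<dots> = \<zero>" using a by (simp add: a_minus_def r_neg)
  finally show False by simp
qed

lemma (in field) part2:
  assumes fin: "finite W" and P: "\<forall>j\<in>R'. D j \<subseteq> W \<and> S j \<subseteq> W - D j"
    and nhc: "\<not> has_internal_conflict W R' D S"
    and card: "card W \<le> card (carrier R)" and finc: "finite (carrier R)"
  shows "\<exists>V. valid_scalar_linear_code R W R' D S 2 V"
proof -
  obtain f where f: "f ` W \<subseteq> carrier R" "inj_on f W" using card_le_inj[OF fin finc card] by blast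
  define sa where "sa = same_alignment_set W R' D S"
  define rep where "rep = (\<lambda>a. SOME b. sa a b)"
  have rep1: "sa a (rep a)" if "a \<in> W" for a
    unfolding rep_def by (rule someI[of _ a]) (use that sa_refl in \<open>simp add: sa_def\<close>)
  have repW: "rep a \<in> W" if "a \<in> W" for a using rep1[OF that] unfolding sa_def same_alignment_set_def by auto
  have rep2: "rep a = rep b" if "sa a b" for a b
  proof -
    have "(\<lambda>c. sa a c) = (\<lambda>c. sa b c)"
    proof (rule ext)
      fix c
      have "sa b a" using that sa_sym unfolding sa_def by fast
      then show "sa a c = sa b c" using that sa_trans[of W R' D S] unfolding sa_def by blast
    qed
    then show ?thesis unfolding rep_def by simp
  qed
  define x where "x = (\<lambda>a. f (rep a))"
  have xc: "x \<in> W \<rightarrow> carrier R" unfolding x_def using f repW by auto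
  define V where "V = (\<lambda>i (l::nat). if l = 0 then \<one> else x i)"
  have "valid_scalar_linear_code R W R' D S 2 V"
    unfolding valid_scalar_linear_code_def
  proof (intro conjI ballI allI impI)
    fix i l assume "i \<in> W" "l < (2::nat)"
    then show "V i l \<in> carrier R" using xc unfolding V_def by auto
  next
    fix j k w w'
    assume j: "j \<in> R'" and k: "k \<in> D j" and
      h: "w \<in> W \<rightarrow> carrier R \<and> w' \<in> W \<rightarrow> carrier R \<and> (\<forall>i\<in>S j. w i = w' i) \<and>
        (\<forall>l<2. codeword R W V w l = codeword R W V w' l)"
    have kW: "k \<in> W" and kS: "k \<notin> S j" using P j k by auto
    have xkc: "x k \<in> carrier R" using xc kW by auto
    obtain c where cc: "c \<in> carrier R" "x k \<noteq> c" "\<forall>i\<in>W - S j - {k}. x i = c"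
    proof (cases "W - S j - {k} = {}")
      case True
      show ?thesis
      proof (rule that[of "x k \<oplus> \<one>"])
        show "x k \<oplus> \<one> \<in> carrier R" using xkc by simp
        show "x k \<noteq> x k \<oplus> \<one>" using xkc by (rule one_ne_add)
        show "\<forall>i\<in>W - S j - {k}. x i = x k \<oplus> \<one>" using True by blast
      qed
    next
      case False
      then obtain a0 where a0: "a0 \<in> W - S j - {k}" by blast
      have "\<forall>i\<in>W - S j - {k}. x i = x a0"
      proof
        fix i assume i: "i \<in> W - S j - {k}"
        show "x i = x a0"
        proof (cases "i = a0")
          case False
          have "align_edge W R' D S i a0" unfolding align_edge_def
            proof (intro conjI bexI)
            show "k \<noteq> i" "k \<noteq> a0" "i \<notin> S j" "a0 \<notin> S j" "i \<in> W" "a0 \<in> W" "i \<noteq> a0"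
              using i a0 False by auto
          qed (use j k in auto)
          then have "sa i a0" unfolding sa_def same_alignment_set_def using i a0 by auto
          then show ?thesis unfolding x_def using rep2 by simp
        qed simp
      qed
      moreover have "x k \<noteq> x a0"
      proof
        assume "x k = x a0"
        then have eq: "rep k = rep a0" unfolding x_def using f(2) repW kW a0 by (auto dest: inj_onD)
        have s1: "sa k (rep a0)" using rep1[OF kW] unfolding eq .
        have s2: "sa (rep a0) a0" using rep1[of a0] a0 sa_sym unfolding sa_def by fast
        have "sa k a0" using sa_trans[OF s1[unfolded sa_def] s2[unfolded sa_def]] unfolding sa_def .
        moreover have "in_conflict W R' D S k a0"
        proof -
          have "a0 \<in> Interf W D S j k" unfolding Interf_def using k a0 by simp
          then show ?thesis unfolding in_conflict_def using kW a0 j k by blast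
        qed
        ultimately show False using nhc unfolding has_internal_conflict_def sa_def by blast
      qed
      moreover have "x a0 \<in> carrier R" using xc a0 by auto
      ultimately show ?thesis using that[of "x a0"] by blast
    qed
    have h2: "w \<in> W \<rightarrow> carrier R" "w' \<in> W \<rightarrow> carrier R" "\<forall>i\<in>S j. w i = w' i"
      "codeword R W V w 0 = codeword R W V w' 0" "codeword R W V w 1 = codeword R W V w' 1"
      using h by auto
    show "w k = w' k"
      by (rule decode[OF fin kW kS xc cc(1,2,3) h2 V_def])
  qed
  then show ?thesis by blast
qed

theorem theorem5:
  fixes W W' :: "'m set" and T :: nat and D S :: "nat \<Rightarrow> 'm set"
  assumes "index_coding_problem W {1..T} D S"
    and "W' \<subseteq> W"
  shows "(has_internal_conflict W' (restr_receivers W' {1..T} D) (restr_sets W' D) (restr_sets W' S)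
           \<longrightarrow> (\<forall>Fld :: 'e ring. field Fld \<and> finite (carrier Fld) \<longrightarrow>
                 \<not> (\<exists>V. valid_scalar_linear_code Fld W' (restr_receivers W' {1..T} D)
                         (restr_sets W' D) (restr_sets W' S) 2 V)))
       \<and> (\<not> has_internal_conflict W' (restr_receivers W' {1..T} D) (restr_sets W' D) (restr_sets W' S)
           \<longrightarrow> (\<exists>N. \<forall>Fld :: 'e ring. field Fld \<and> finite (carrier Fld) \<and> card (carrier Fld) \<ge> N \<longrightarrow>
                 (\<exists>V. valid_scalar_linear_code Fld W' (restr_receivers W' {1..T} D)
                         (restr_sets W' D) (restr_sets W' S) 2 V)))"
proof -
  let ?R = "restr_receivers W' {1..T} D" and ?D = "restr_sets W' D" and ?S = "restr_sets W' S"
  have icp: "finite W" "\<forall>j\<in>{1..T}. D j \<subseteq> W \<and> S j \<subseteq> W - D j" "\<forall>w\<in>W. \<exists>j\<in>{1..T}. w \<in> D j"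
    using assms(1) unfolding index_coding_problem_def by auto
  have fin: "finite W'" using icp(1) assms(2) finite_subset by blast
  have P: "\<forall>j\<in>?R. ?D j \<subseteq> W' \<and> ?S j \<subseteq> W' - ?D j"
    using icp(2) unfolding restr_receivers_def restr_sets_def by auto
  have Q: "\<forall>a\<in>W'. \<exists>j\<in>?R. a \<in> ?D j"
  proof
    fix a assume a: "a \<in> W'"
    then obtain j where "j \<in> {1..T}" "a \<in> D j" using icp(3) assms(2) by blast
    then show "\<exists>j\<in>?R. a \<in> ?D j" using a unfolding restr_receivers_def restr_sets_def by blast
  qed
  show ?thesis
  proof (intro conjI impI allI)
    fix Fld :: "'e ring"
    assume hc: "has_internal_conflict W' ?R ?D ?S" and F: "field Fld \<and> finite (carrier Fld)"
    show "\<not> (\<exists>V. valid_scalar_linear_code Fld W' ?R ?D ?S 2 V)"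
      using field.part1[OF conjunct1[OF F] _ fin P Q hc] by blast
  next
    assume nhc: "\<not> has_internal_conflict W' ?R ?D ?S"
    show "\<exists>N. \<forall>Fld :: 'e ring. field Fld \<and> finite (carrier Fld) \<and> card (carrier Fld) \<ge> N \<longrightarrow>
                 (\<exists>V. valid_scalar_linear_code Fld W' ?R ?D ?S 2 V)"
      using field.part2[OF _ fin P nhc] by blast
  qed
qed

end
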